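(* Let $\mathcal{T}$ be an $l$-eligible microdata table, and run Phase One of the algorithm described in the context, obtaining $\dot{Q}_1,\dots,\dot{Q}_s,\dot{R}$. If $\dot{R}$ is $l$-eligible, then $(\dot{Q}_1,\dots,\dot{Q}_s,\dot{R})$ is an optimal solution of the reformulated tuple minimization problem, i.e., $|\dot{R}| = OPT$.
   Context: A microdata table $\mathcal{T}$ is a multiset of $n$ tuples, each with values on $d$ quasi-identifier (QI) attributes and one sensitive attribute (SA). For a multiset $Q$ of tuples and SA value $v$, $h(Q,v)$ is the number of tuples of $Q$ with SA value $v$, $h(Q)=\max_v h(Q,v)$, and the pillars of $Q$ are the SA values $v$ with $h(Q,v)=h(Q)$. $Q$ is $l$-eligible if $|Q|\ge l\cdot h(Q)$. Partition $\mathcal{T}$ into $Q_1,\dots,Q_s$, the maximal classes of tuples having identical values on all QI attributes. Reformulated tuple minimization: choose sub-multisets $Q'_i\subseteq Q_i$ and let $R'=\mathcal{T}\setminus\bigcup_i Q'_i$, such that every $Q'_i$ and $R'$ are $l$-eligible, minimizing $|R'|$; $OPT$ denotes the minimum value. Phase One: start with $R=\emptyset$; for each $i$, while $Q_i$ is not $l$-eligible, move one tuple whose SA value is a pillar of $Q_i$ from $Q_i$ to $R$ (ties arbitrary). $\dot{Q}_1,\dots,\dot{Q}_s,\dot{R}$ denote the resulting multisets. *)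

theory Defs
  imports Main "HOL-Library.Multiset"
begin

text \<open>A tuple is a pair (QI-vector, SA value); a table is a multiset of tuples.\<close>

definition hv :: "('q \<times> 's) multiset \<Rightarrow> 's \<Rightarrow> nat" where
  "hv Q v = size (filter_mset (\<lambda>t. snd t = v) Q)"

definition hmax :: "('q \<times> 's) multiset \<Rightarrow> nat" where
  "hmax Q = Max (insert 0 (hv Q ` (snd ` set_mset Q)))"

definition pillar :: "('q \<times> 's) multiset \<Rightarrow> 's \<Rightarrow> bool" where
  "pillar Q v \<longleftrightarrow> hv Q v = hmax Q"

definition eligible :: "nat \<Rightarrow> ('q \<times> 's) multiset \<Rightarrow> bool" where
  "eligible l Q \<longleftrightarrow> l * hmax Q \<le> size Q"

definition QIs :: "('q \<times> 's) multiset \<Rightarrow> 'q set" where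
  "QIs T = fst ` set_mset T"

definition cls :: "('q \<times> 's) multiset \<Rightarrow> 'q \<Rightarrow> ('q \<times> 's) multiset" where
  "cls T q = filter_mset (\<lambda>t. fst t = q) T"

definition is_solution ::
  "nat \<Rightarrow> ('q \<times> 's) multiset \<Rightarrow> ('q \<Rightarrow> ('q \<times> 's) multiset) \<Rightarrow> ('q \<times> 's) multiset \<Rightarrow> bool" where
  "is_solution l T Q' R' \<longleftrightarrow>
     (\<forall>q\<in>QIs T. Q' q \<subseteq># cls T q \<and> eligible l (Q' q)) \<and>
     R' = T - (\<Sum>q\<in>QIs T. Q' q) \<and> eligible l R'"

definition OPT :: "nat \<Rightarrow> ('q \<times> 's) multiset \<Rightarrow> nat" where
  "OPT l T = (LEAST k. \<exists>Q' R'. is_solution l T Q' R' \<and> size R' = k)"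

inductive phase1_step :: "nat \<Rightarrow> ('q \<times> 's) multiset \<times> ('q \<times> 's) multiset
    \<Rightarrow> ('q \<times> 's) multiset \<times> ('q \<times> 's) multiset \<Rightarrow> bool" where
  "\<not> eligible l Q \<Longrightarrow> t \<in># Q \<Longrightarrow> pillar Q (snd t) \<Longrightarrow>
     phase1_step l (Q, R) (Q - {#t#}, R + {#t#})"

definition phase1_class :: "nat \<Rightarrow> ('q \<times> 's) multiset \<Rightarrow> ('q \<times> 's) multiset
    \<Rightarrow> ('q \<times> 's) multiset \<Rightarrow> bool" where
  "phase1_class l Q Qd Rd \<longleftrightarrow> (phase1_step l)\<^sup>*\<^sup>* (Q, {#}) (Qd, Rd) \<and> eligible l Qd"

end

theory Submission
  imports Defs
begin

lemma hv_le_hmax: "hv Q v \<le> hmax Q"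
proof (cases "hv Q v = 0")
  case False
  then have "v \<in> snd ` set_mset Q"
    unfolding hv_def by (metis (mono_tags, lifting) filter_mset_eq_mempty_iff image_eqI size_empty)
  then show ?thesis unfolding hmax_def by (intro Max_ge) auto
qed simp

lemma hmax_cong:
  assumes "\<And>v. hv Q1 v = hv Q2 v" shows "hmax Q1 = hmax Q2"
proof -
  have s: "snd ` set_mset Q = {v. hv Q v > 0}" for Q :: "('q \<times> 's) multiset"
  proof -
    have "hv Q v > 0 \<longleftrightarrow> (\<exists>a. (a, v) \<in># Q)" for v
      unfolding hv_def by (simp add: nonempty_has_size[symmetric])
    moreover have "snd ` set_mset Q = {v. \<exists>a. (a, v) \<in># Q}" by force
    ultimately show ?thesis by simp
  qed
  show ?thesis unfolding hmax_def s using assms by simp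
qed

lemma hv_mono: "A \<subseteq># B \<Longrightarrow> hv A v \<le> hv B v"
  unfolding hv_def by (simp add: size_mset_mono multiset_filter_mono)

lemma exists_other:
  assumes "A \<subseteq># B" "hv A v < hv B v"
  shows "\<exists>t'. snd t' = v \<and> count A t' < count B t'"
proof (rule ccontr)
  assume na: "\<not> ?thesis"
  have "filter_mset (\<lambda>t. snd t = v) A = filter_mset (\<lambda>t. snd t = v) B"
  proof (rule multiset_eqI)
    fix x
    have "count A x \<le> count B x" using mset_subset_eq_count[OF assms(1)] .
    moreover have "snd x = v \<Longrightarrow> \<not> count A x < count B x" using na by blast
    ultimately show "count (filter_mset (\<lambda>t. snd t = v) A) x = count (filter_mset (\<lambda>t. snd t = v) B) x"
      by (simp add: count_filter_mset)
  qed
  then show False using assms(2) unfolding hv_def by simp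
qed

lemma step_lemma:
  assumes ne: "\<not> eligible l Qc" and t: "t \<in># Qc" and p: "pillar Qc (snd t)"
    and sub: "Q'' \<subseteq># Qc" and el: "eligible l Q''"
  shows "\<exists>Q'''. Q''' \<subseteq># Qc - {#t#} \<and> eligible l Q''' \<and> size Q''' = size Q''"
proof (cases "Q'' \<subseteq># Qc - {#t#}")
  case True then show ?thesis using el by blast
next
  case False
  then obtain x where x: "count Q'' x > count (Qc - {#t#}) x"
    by (meson mset_subset_eq_count not_le_imp_less subseteq_mset_def)
  have cx: "count Q'' x \<le> count Qc x" using sub by (simp add: mset_subset_eq_count)
  have xt: "x = t" using x cx by (auto split: if_splits)
  have ct1: "count Qc t \<ge> 1" using t by simp
  have ct: "count Q'' t = count Qc t" using x cx xt ct1 by auto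
  show ?thesis
  proof (cases "hmax Q'' < hmax Qc")
    case True
    have "hv Q'' (snd t) < hv Qc (snd t)"
      using hv_le_hmax[of Q'' "snd t"] True p unfolding pillar_def by simp
    then obtain t' where t': "snd t' = snd t" "count Q'' t' < count Qc t'"
      using exists_other[OF sub] by blast
    have tt: "t' \<noteq> t" using t' ct by auto
    have "count Q'' t > 0" using ct ct1 by simp
    then have tin: "t \<in># Q''" by simp
    define Q3 where "Q3 = Q'' - {#t#} + {#t'#}"
    have "Q3 \<subseteq># Qc - {#t#}"
      unfolding subseteq_mset_def Q3_def
    proof
      fix y show "count (Q'' - {#t#} + {#t'#}) y \<le> count (Qc - {#t#}) y"
        using ct t' tt mset_subset_eq_count[OF sub, of y] by auto
    qed
    moreover have hv3: "hv Q3 v = hv Q'' v" for v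
    proof (cases "snd t = v")
      case True
      then have "t \<in># filter_mset (\<lambda>x. snd x = v) Q''" using tin by simp
      then have "size (filter_mset (\<lambda>x. snd x = v) Q'') > 0"
        by (metis gr0I size_eq_0_iff_empty empty_iff set_mset_empty)
      then show ?thesis unfolding Q3_def hv_def using tin t'(1) True
        by (simp add: size_Diff_submset)
    next
      case False
      then show ?thesis unfolding Q3_def hv_def using tin t'(1)
        by (simp add: size_Diff_submset)
    qed
    moreover have sz: "size Q3 = size Q''"
    proof -
      have "size Q'' > 0" using tin by (metis gr0I size_eq_0_iff_empty empty_iff set_mset_empty)
      then show ?thesis unfolding Q3_def using tin by (simp add: size_Diff_submset)
    qed
    moreover have "eligible l Q3"
      using el hmax_cong[OF hv3] sz unfolding eligible_def by simp
    ultimately show ?thesis by blast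
  next
    case False
    have "hmax Qc \<le> hmax Q''" using False by (rule leI)
    then have "l * hmax Qc \<le> l * hmax Q''" by (rule mult_le_mono2)
    also have "\<dots> \<le> size Q''" using el unfolding eligible_def .
    also have "\<dots> \<le> size Qc" by (rule size_mset_mono[OF sub])
    finally have "eligible l Qc" unfolding eligible_def .
    then show ?thesis using ne by contradiction
  qed
qed


lemma run_inv:
  assumes "(phase1_step l)\<^sup>*\<^sup>* (Q, {#}) (Qc, Rc)"
  shows "Qc + Rc = Q \<and> Qc \<subseteq># Q \<and>
    (\<forall>Q'. Q' \<subseteq># Q \<longrightarrow> eligible l Q' \<longrightarrow>
       (\<exists>Q''. Q'' \<subseteq># Qc \<and> eligible l Q'' \<and> size Q' \<le> size Q''))"
  using assms
proof (induction rule: rtranclp_induct2)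
  case refl
  have "Q' \<subseteq># Q \<Longrightarrow> eligible l Q' \<Longrightarrow> Q' \<subseteq># Q \<and> eligible l Q' \<and> size Q' \<le> size Q'" for Q'
    by simp
  then show ?case by auto
next
  case (step Qa Ra Qb Rb)
  from step.hyps(2) obtain t where st: "\<not> eligible l Qa" "t \<in># Qa" "pillar Qa (snd t)"
    "Qb = Qa - {#t#}" "Rb = Ra + {#t#}"
    by (cases rule: phase1_step.cases) blast
  have e1: "Qa - {#t#} + (Ra + {#t#}) = (Qa - {#t#} + {#t#}) + Ra"
    by (metis add.assoc add.commute)
  have e2: "Qa - {#t#} + {#t#} = Qa" using insert_DiffM[OF st(2)] by simp
  note I1 = step.IH[THEN conjunct1]
  note I2 = step.IH[THEN conjunct2, THEN conjunct1]
  note I3 = step.IH[THEN conjunct2, THEN conjunct2]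
  have "Qb + Rb = Q" using I1 unfolding st(4,5) e1 e2 .
  moreover have "Qb \<subseteq># Q" unfolding st(4)
    using subset_mset.order_trans[OF diff_subset_eq_self[of Qa "{#t#}"] I2] .
  moreover have "\<exists>Q''. Q'' \<subseteq># Qb \<and> eligible l Q'' \<and> size Q' \<le> size Q''"
    if a: "Q' \<subseteq># Q" "eligible l Q'" for Q'
  proof -
    obtain Q'' where q: "Q'' \<subseteq># Qa" "eligible l Q''" "size Q' \<le> size Q''"
      using I3 a by blast
    obtain Q3 where "Q3 \<subseteq># Qa - {#t#}" "eligible l Q3" "size Q3 = size Q''"
      using step_lemma[OF st(1-3) q(1,2)] by blast
    then show ?thesis using q(3) unfolding st(4) by (metis order.refl)
  qed
  ultimately show ?case by (intro conjI allI impI)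
qed

lemma class_opt:
  assumes "phase1_class l Q Qd Rd"
  shows "Qd + Rd = Q \<and> Qd \<subseteq># Q \<and> eligible l Qd \<and>
    (\<forall>Q'. Q' \<subseteq># Q \<longrightarrow> eligible l Q' \<longrightarrow> size Q' \<le> size Qd)"
proof -
  have r: "(phase1_step l)\<^sup>*\<^sup>* (Q, {#}) (Qd, Rd)" "eligible l Qd"
    using assms unfolding phase1_class_def by auto
  show ?thesis using run_inv[OF r(1)] r(2)
    by (meson size_mset_mono le_trans)
qed

lemma T_decomp: "T = (\<Sum>q\<in>QIs T. cls T q)"
proof (rule multiset_eqI)
  fix x
  have fin: "finite (QIs T)" unfolding QIs_def by simp
  have "count (\<Sum>q\<in>QIs T. cls T q) x = (\<Sum>q\<in>QIs T. if fst x = q then count T x else 0)"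
    unfolding count_sum cls_def by (intro sum.cong) auto
  also have "\<dots> = (if fst x \<in> QIs T then count T x else 0)"
    using fin by (simp add: sum.delta)
  also have "\<dots> = count T x"
    unfolding QIs_def by (auto simp: image_iff not_in_iff[symmetric])
  finally show "count T x = count (\<Sum>q\<in>QIs T. cls T q) x" by simp
qed

theorem corollary1:
  fixes T :: "('q \<times> 's) multiset" and l :: nat
    and Qd Rq :: "'q \<Rightarrow> ('q \<times> 's) multiset" and Rd :: "('q \<times> 's) multiset"
  assumes "eligible l T"
    and "\<forall>q\<in>QIs T. phase1_class l (cls T q) (Qd q) (Rq q)"
    and "Rd = (\<Sum>q\<in>QIs T. Rq q)"
    and "eligible l Rd"
  shows "is_solution l T Qd Rd \<and> size Rd = OPT l T"
proof -
  have co: "\<And>q. q \<in> QIs T \<Longrightarrow> Qd q + Rq q = cls T q \<and> Qd q \<subseteq># cls T q \<and> eligible l (Qd q) \<and>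
    (\<forall>Q'. Q' \<subseteq># cls T q \<longrightarrow> eligible l Q' \<longrightarrow> size Q' \<le> size (Qd q))"
    using assms(2) class_opt by blast
  have Tsum: "T = (\<Sum>q\<in>QIs T. Qd q) + Rd"
  proof -
    have "T = (\<Sum>q\<in>QIs T. Qd q + Rq q)"
      using co by (subst T_decomp) (intro sum.cong; simp)
    then show ?thesis using assms(3) by (simp add: sum.distrib)
  qed
  have sol: "is_solution l T Qd Rd"
    unfolding is_solution_def using co assms(4) Tsum by (metis add_diff_cancel_left')
  have low: "size Rd \<le> size R'" if "is_solution l T Q' R'" for Q' R'
  proof -
    have q: "\<forall>q\<in>QIs T. Q' q \<subseteq># cls T q \<and> eligible l (Q' q)" "R' = T - (\<Sum>q\<in>QIs T. Q' q)"
      using that unfolding is_solution_def by auto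
    have "(\<Sum>q\<in>QIs T. size (Q' q)) \<le> (\<Sum>q\<in>QIs T. size (Qd q))"
      using q(1) co by (intro sum_mono) blast
    moreover have "size T = (\<Sum>q\<in>QIs T. size (Qd q)) + size Rd"
      using Tsum by (metis size_union size_multiset_sum)
    moreover have "size T - (\<Sum>q\<in>QIs T. size (Q' q)) \<le> size R'"
      using q(2) diff_size_le_size_Diff by (metis size_multiset_sum)
    ultimately show ?thesis by linarith
  qed
  have "OPT l T = size Rd"
    unfolding OPT_def
  proof (rule Least_equality)
    show "\<exists>Q' R'. is_solution l T Q' R' \<and> size R' = size Rd" using sol by blast
  next
    fix y assume "\<exists>Q' R'. is_solution l T Q' R' \<and> size R' = y"
    then show "size Rd \<le> y" using low by blast
  qed
  then show ?thesis using sol by simp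
qed

end
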